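(* Let $\mathbf{A}\in\mathbb{R}^{n\times n}$ be a symmetric positive semidefinite matrix, let $\mathbf{s}_0\in[-1,1]^n$ and let $k>0$ be an integer. Consider the problem of maximizing $\mathbf{s}^{\intercal}\mathbf{A}\mathbf{s}$ subject to $\mathbf{s}\in[-1,1]^n$ and $\|\mathbf{s}-\mathbf{s}_0\|_0\le k$. Then there exists an optimal solution $\mathbf{s}$ such that $\mathbf{s}(i)\in\{-1,1\}$ for all entries $i$ with $\mathbf{s}(i)\neq\mathbf{s}_0(i)$. In particular, if $\mathbf{s}_0\in\{-1,1\}^n$ or $k=n$, there exists an optimal solution $\mathbf{s}\in\{-1,1\}^n$.
   Context: $\|\cdot\|_0$ counts nonzero entries; $\mathbf{s}(i)$ is the $i$-th entry of $\mathbf{s}$. *)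

theory Defs
  imports "HOL-Analysis.Analysis"
begin

definition l0 :: "real ^ 'n \<Rightarrow> nat" where
  "l0 x = card {i. x $ i \<noteq> 0}"

definition feasible :: "real ^ 'n \<Rightarrow> nat \<Rightarrow> real ^ 'n \<Rightarrow> bool" where
  "feasible s0 k s \<longleftrightarrow> (\<forall>i. \<bar>s $ i\<bar> \<le> 1) \<and> l0 (s - s0) \<le> k"

definition optimal :: "real ^ 'n ^ 'n \<Rightarrow> real ^ 'n \<Rightarrow> nat \<Rightarrow> real ^ 'n \<Rightarrow> bool" where
  "optimal A s0 k s \<longleftrightarrow> feasible s0 k s \<and>
     (\<forall>t. feasible s0 k t \<longrightarrow> t \<bullet> (A *v t) \<le> s \<bullet> (A *v s))"

end

theory Submission
  imports Defs
begin

lemma qf_convex: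
  fixes A :: "real ^ 'n ^ 'n" and x y :: "real ^ 'n" and l :: real
  assumes psdA: "\<forall>x. 0 \<le> x \<bullet> (A *v x)" and l: "0 \<le> l" "l \<le> 1"
  shows "(l *\<^sub>R x + (1 - l) *\<^sub>R y) \<bullet> (A *v (l *\<^sub>R x + (1 - l) *\<^sub>R y))
     \<le> l * (x \<bullet> (A *v x)) + (1 - l) * (y \<bullet> (A *v y))"
proof -
  have d: "0 \<le> (x - y) \<bullet> (A *v (x - y))" using psdA by blast
  have e1: "(x - y) \<bullet> (A *v (x - y)) = x \<bullet> (A *v x) - x \<bullet> (A *v y) - y \<bullet> (A *v x) + y \<bullet> (A *v y)"
    by (simp add: matrix_vector_mult_diff_distrib inner_diff_left inner_diff_right)
  have e2: "(l *\<^sub>R x + (1 - l) *\<^sub>R y) \<bullet> (A *v (l *\<^sub>R x + (1 - l) *\<^sub>R y))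
     = l*l * (x \<bullet> (A *v x)) + l*(1-l) * (x \<bullet> (A *v y)) + (1-l)*l*(y \<bullet> (A *v x)) + (1-l)*(1-l)*(y \<bullet> (A *v y))"
    by (simp add: matrix_vector_right_distrib matrix_vector_mult_scaleR inner_add_left inner_add_right algebra_simps)
  have "0 \<le> l * (1 - l)" using l by simp
  hence "0 \<le> l * (1 - l) * ((x - y) \<bullet> (A *v (x - y)))" using d by simp
  thus ?thesis unfolding e2 using e1 by (simp add: algebra_simps)
qed

lemma one_coord:
  fixes A :: "real ^ 'n ^ 'n" and t :: "real ^ 'n"
  assumes psdA: "\<forall>x. 0 \<le> x \<bullet> (A *v x)" and ti: "\<bar>t $ i\<bar> \<le> 1"
  shows "\<exists>v. (\<forall>j. j \<noteq> i \<longrightarrow> v $ j = t $ j) \<and> v $ i \<in> {-1, 1} \<and>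
     t \<bullet> (A *v t) \<le> v \<bullet> (A *v v)"
proof -
  define x :: "real ^ 'n" where "x = (\<chi> j. if j = i then 1 else t $ j)"
  define y :: "real ^ 'n" where "y = (\<chi> j. if j = i then -1 else t $ j)"
  define l where "l = (1 + t $ i) / 2"
  have l: "0 \<le> l" "l \<le> 1" using ti by (auto simp: l_def)
  have teq: "t = l *\<^sub>R x + (1 - l) *\<^sub>R y"
    unfolding vec_eq_iff
  proof
    fix j
    show "t $ j = (l *\<^sub>R x + (1 - l) *\<^sub>R y) $ j"
    proof (cases "j = i")
      case True
      thus ?thesis by (simp add: x_def y_def l_def add_divide_distrib diff_divide_distrib)
    next
      case False
      have "l * t $ j + (1 - l) * t $ j = t $ j" by (simp add: algebra_simps)
      thus ?thesis using False by (simp add: x_def y_def)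
    qed
  qed
  have c: "t \<bullet> (A *v t) \<le> l * (x \<bullet> (A *v x)) + (1 - l) * (y \<bullet> (A *v y))"
    using qf_convex[OF psdA l, of x y] teq by simp
  show ?thesis
  proof (cases "x \<bullet> (A *v x) \<le> y \<bullet> (A *v y)")
    case True
    have "l * (x \<bullet> (A *v x)) + (1 - l) * (y \<bullet> (A *v y)) \<le> y \<bullet> (A *v y)"
    proof -
      have "l * (x \<bullet> (A *v x)) \<le> l * (y \<bullet> (A *v y))" using True l by (simp add: mult_left_mono)
      thus ?thesis by (simp add: algebra_simps)
    qed
    thus ?thesis using c by (intro exI[of _ y]) (auto simp: y_def)
  next
    case False
    have "l * (x \<bullet> (A *v x)) + (1 - l) * (y \<bullet> (A *v y)) \<le> x \<bullet> (A *v x)"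
    proof -
      have "(1 - l) * (y \<bullet> (A *v y)) \<le> (1 - l) * (x \<bullet> (A *v x))" using False l by (simp add: mult_left_mono)
      thus ?thesis by (simp add: algebra_simps)
    qed
    thus ?thesis using c by (intro exI[of _ x]) (auto simp: x_def)
  qed
qed

lemma many_coords:
  fixes A :: "real ^ 'n ^ 'n" and t :: "real ^ 'n" and B :: "'n set"
  assumes psdA: "\<forall>x. 0 \<le> x \<bullet> (A *v x)" and tb: "\<forall>i. \<bar>t $ i\<bar> \<le> 1" and fin: "finite B"
  shows "\<exists>v. (\<forall>j. j \<notin> B \<longrightarrow> v $ j = t $ j) \<and> (\<forall>j\<in>B. v $ j \<in> {-1, 1}) \<and>
     (\<forall>j. \<bar>v $ j\<bar> \<le> 1) \<and> t \<bullet> (A *v t) \<le> v \<bullet> (A *v v)"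
  using fin
proof (induction B rule: finite_induct)
  case empty
  show ?case using tb by (intro exI[of _ t]) auto
next
  case (insert i B)
  then obtain v where v: "\<forall>j. j \<notin> B \<longrightarrow> v $ j = t $ j" "\<forall>j\<in>B. v $ j \<in> {-1, 1}"
    "\<forall>j. \<bar>v $ j\<bar> \<le> 1" "t \<bullet> (A *v t) \<le> v \<bullet> (A *v v)" by blast
  obtain w where w: "\<forall>j. j \<noteq> i \<longrightarrow> w $ j = v $ j" "w $ i \<in> {-1, 1}"
     "v \<bullet> (A *v v) \<le> w \<bullet> (A *v w)"
    using one_coord[OF psdA, of v i] v(3) by blast
  show ?case
  proof (intro exI[of _ w] conjI allI ballI impI)
    fix j assume "j \<notin> insert i B" thus "w $ j = t $ j" using v w by auto
  next
    fix j assume "j \<in> insert i B" thus "w $ j \<in> {-1, 1}" using v w insert by (cases "j = i") auto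
  next
    fix j show "\<bar>w $ j\<bar> \<le> 1" using v w by (cases "j = i") auto
  next
    show "t \<bullet> (A *v t) \<le> w \<bullet> (A *v w)" using v w by linarith
  qed
qed

theorem lemmaB1:
  fixes A :: "real ^ 'n ^ 'n" and s0 :: "real ^ 'n" and k :: nat
  assumes symA: "transpose A = A"
    and psdA: "\<forall>x. 0 \<le> x \<bullet> (A *v x)"
    and s0: "\<forall>i. \<bar>s0 $ i\<bar> \<le> 1"
    and k: "k > 0"
  shows "(\<exists>s. optimal A s0 k s \<and> (\<forall>i. s $ i \<noteq> s0 $ i \<longrightarrow> s $ i \<in> {-1, 1}))
    \<and> (((\<forall>i. s0 $ i \<in> {-1, 1}) \<or> k = CARD('n)) \<longrightarrow>
         (\<exists>s. optimal A s0 k s \<and> (\<forall>i. s $ i \<in> {-1, 1})))"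
proof -
  define f where "f = (\<lambda>x::real^'n. x \<bullet> (A *v x))"
  define V where "V = {v. feasible s0 k v \<and> (\<forall>i. v $ i \<noteq> s0 $ i \<longrightarrow> v $ i \<in> {-1, 1})}"
  have "V \<subseteq> vec_lambda ` (PiE UNIV (\<lambda>i. {-1, 1, s0 $ i}))"
  proof
    fix v assume "v \<in> V"
    hence "(\<lambda>i. v $ i) \<in> PiE UNIV (\<lambda>i. {-1, 1, s0 $ i})" by (auto simp: V_def)
    thus "v \<in> vec_lambda ` (PiE UNIV (\<lambda>i. {-1, 1, s0 $ i}))"
      by (metis image_eqI vec_lambda_eta)
  qed
  moreover have "finite (PiE (UNIV::'n set) (\<lambda>i. {-1, 1, s0 $ i}))"
    by (intro finite_PiE) auto
  ultimately have finV: "finite V" using finite_subset by blast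
  have s0V: "s0 \<in> V" using s0 by (simp add: V_def feasible_def l0_def)
  define m where "m = Max (f ` V)"
  have "m \<in> f ` V" unfolding m_def using finV s0V by (intro Max_in) auto
  then obtain s where sV: "s \<in> V" and fs: "f s = m" by blast
  have maxs: "\<forall>v\<in>V. f v \<le> f s" using finV fs m_def by auto
  have opt: "optimal A s0 k s"
    unfolding optimal_def
  proof (intro conjI allI impI)
    show "feasible s0 k s" using sV by (simp add: V_def)
  next
    fix t assume ft: "feasible s0 k t"
    define B where "B = {i. t $ i \<noteq> s0 $ i}"
    have tb: "\<forall>i. \<bar>t $ i\<bar> \<le> 1" using ft by (simp add: feasible_def)
    obtain v where v: "\<forall>j. j \<notin> B \<longrightarrow> v $ j = t $ j" "\<forall>j\<in>B. v $ j \<in> {-1, 1}"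
      "\<forall>j. \<bar>v $ j\<bar> \<le> 1" "f t \<le> f v"
      using many_coords[OF psdA tb, of B] unfolding f_def by auto
    have cB: "card B \<le> k" using ft by (simp add: feasible_def l0_def B_def)
    have "{i. (v - s0) $ i \<noteq> 0} \<subseteq> B" using v(1) B_def by auto
    hence "l0 (v - s0) \<le> card B" unfolding l0_def by (intro card_mono) auto
    hence "v \<in> V" using cB v unfolding V_def feasible_def B_def by auto
    thus "t \<bullet> (A *v t) \<le> s \<bullet> (A *v s)" using maxs v(4) unfolding f_def by fastforce
  qed
  have p1: "\<forall>i. s $ i \<noteq> s0 $ i \<longrightarrow> s $ i \<in> {-1, 1}" using sV by (simp add: V_def)
  have p2: "\<exists>s. optimal A s0 k s \<and> (\<forall>i. s $ i \<in> {-1, 1})"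
    if h: "(\<forall>i. s0 $ i \<in> {-1, 1}) \<or> k = CARD('n)"
  proof (cases "\<forall>i. s0 $ i \<in> {-1, 1}")
    case True
    thus ?thesis using opt p1 by metis
  next
    case False
    hence kc: "k = CARD('n)" using h by blast
    have sb: "\<forall>i. \<bar>s $ i\<bar> \<le> 1" using opt by (simp add: optimal_def feasible_def)
    obtain v where v: "\<forall>j\<in>UNIV. v $ j \<in> {-1, 1}"
      "\<forall>j. \<bar>v $ j\<bar> \<le> 1" "f s \<le> f v"
      using many_coords[OF psdA sb, of UNIV] unfolding f_def by auto
    have "l0 (v - s0) \<le> k" unfolding l0_def kc by (intro card_mono) auto
    hence fv: "feasible s0 k v" using v by (simp add: feasible_def)
    have "optimal A s0 k v" unfolding optimal_def
      using fv opt v(3) unfolding optimal_def f_def by fastforce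
    thus ?thesis using v by blast
  qed
  show ?thesis using opt p1 p2 by blast
qed

end
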